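(* Let $f\mathrm{Vect}^\times_{\mathbb C}$ be the topological groupoid of finite dimensional complex vector spaces and invertible linear maps, and let $(f\mathrm{Vect}^\times_{\mathbb C})^{\beta\delta}$ be the topological groupoid of finite dimensional complex vector spaces equipped with a nondegenerate hermitian form (of any signature) and isometries, both with the usual topology on morphism spaces; let $\phi\colon(f\mathrm{Vect}^\times_{\mathbb C})^{\beta\delta}\to f\mathrm{Vect}^\times_{\mathbb C}$ be the forgetful functor. Suppose $\rho\colon f\mathrm{Vect}^\times_{\mathbb C}\to(f\mathrm{Vect}^\times_{\mathbb C})^{\beta\delta}$ is a functor with $\phi\circ\rho$ homotopic to the identity functor and such that $\rho$ induces homotopy equivalences on morphism spaces. Then for every finite dimensional complex vector space $V$ the hermitian form on $\rho(V)$ is definite. *)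

theory Defs
  imports "HOL-Analysis.Analysis" "Jordan_Normal_Form.Schur_Decomposition"
begin

text \<open>Skeletal model of the topological groupoid fVect^x_C: objects are dimensions n
  (standing for C^n); all morphisms are automorphisms, i.e. elements of GL_n(C),
  represented as invertible n x n complex matrices.\<close>

definition GLm :: "nat \<Rightarrow> complex mat set" where
  "GLm n = {A \<in> carrier_mat n n. invertible_mat A}"

text \<open>The usual (Euclidean) topology on n x n complex matrices, pulled back from the
  entry function (entries outside the n x n range are set to 0) with the product topology.\<close>

definition mat_top :: "nat \<Rightarrow> complex mat topology" where
  "mat_top n = pullback_topology (carrier_mat n n)
      (\<lambda>A (ij::nat \<times> nat). if fst ij < n \<and> snd ij < n then A $$ ij else 0) euclidean"

text \<open>Objects of the hermitian groupoid: (n, H) with H a nondegenerate hermitian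
  n x n matrix (the form (v,w) |-> v^* H w on C^n, of any signature).\<close>

definition herm_obj :: "nat \<times> complex mat \<Rightarrow> bool" where
  "herm_obj X \<longleftrightarrow> snd X \<in> carrier_mat (fst X) (fst X) \<and> mat_adjoint (snd X) = snd X
      \<and> det (snd X) \<noteq> 0"

definition Isom :: "nat \<times> complex mat \<Rightarrow> complex mat set" where
  "Isom X = {A \<in> carrier_mat (fst X) (fst X). invertible_mat A
      \<and> mat_adjoint A * snd X * A = snd X}"

definition definite_obj :: "nat \<times> complex mat \<Rightarrow> bool" where
  "definite_obj X \<longleftrightarrow>
     (\<forall>v::nat \<Rightarrow> complex. (\<exists>i<fst X. v i \<noteq> 0) \<longrightarrow>
        0 < Re (\<Sum>i<fst X. \<Sum>j<fst X. cnj (v i) * snd X $$ (i,j) * v j))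
   \<or> (\<forall>v::nat \<Rightarrow> complex. (\<exists>i<fst X. v i \<noteq> 0) \<longrightarrow>
        Re (\<Sum>i<fst X. \<Sum>j<fst X. cnj (v i) * snd X $$ (i,j) * v j) < 0)"

text \<open>Endofunctors of the skeletal fVect^x_C (morphism part; objects fixed).\<close>

definition GL_functor :: "(nat \<Rightarrow> complex mat \<Rightarrow> complex mat) \<Rightarrow> bool" where
  "GL_functor F \<longleftrightarrow> (\<forall>n.
     (\<forall>A\<in>GLm n. F n A \<in> GLm n) \<and>
     (\<forall>A\<in>GLm n. \<forall>B\<in>GLm n. F n (A * B) = F n A * F n B) \<and>
     F n (1\<^sub>m n) = 1\<^sub>m n)"

definition herm_functor :: "(nat \<Rightarrow> nat \<times> complex mat) \<Rightarrow> (nat \<Rightarrow> complex mat \<Rightarrow> complex mat) \<Rightarrow> bool" where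
  "herm_functor ro rm \<longleftrightarrow> (\<forall>n.
     herm_obj (ro n) \<and>
     (\<forall>A\<in>GLm n. rm n A \<in> Isom (ro n)) \<and>
     (\<forall>A\<in>GLm n. \<forall>B\<in>GLm n. rm n (A * B) = rm n A * rm n B) \<and>
     rm n (1\<^sub>m n) = 1\<^sub>m (fst (ro n)))"

text \<open>phi o rho is homotopic to the identity functor: a homotopy of functors
  C x [0,1] -> C (objects are discrete, so it is constant on objects), i.e. a family of
  functors H t, jointly continuous in (t, morphism), with H 0 = phi o rho and H 1 = id.\<close>

definition homotopic_to_id :: "(nat \<Rightarrow> nat \<times> complex mat) \<Rightarrow> (nat \<Rightarrow> complex mat \<Rightarrow> complex mat) \<Rightarrow> bool" where
  "homotopic_to_id ro rm \<longleftrightarrow> (\<forall>n. fst (ro n) = n) \<and>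
     (\<exists>H :: real \<Rightarrow> nat \<Rightarrow> complex mat \<Rightarrow> complex mat.
        (\<forall>t\<in>{0..1}. GL_functor (H t)) \<and>
        (\<forall>n. \<forall>A\<in>GLm n. H 0 n A = rm n A \<and> H 1 n A = A) \<and>
        (\<forall>n. continuous_map (prod_topology (top_of_set {0..1}) (subtopology (mat_top n) (GLm n)))
                (mat_top n) (\<lambda>(t, A). H t n A)))"

definition homotopy_equivalence_map :: "'a topology \<Rightarrow> 'b topology \<Rightarrow> ('a \<Rightarrow> 'b) \<Rightarrow> bool" where
  "homotopy_equivalence_map X Y f \<longleftrightarrow> continuous_map X Y f \<and>
     (\<exists>g. continuous_map Y X g \<and>
          homotopic_with (\<lambda>x. True) X X (g \<circ> f) id \<and>
          homotopic_with (\<lambda>x. True) Y Y (f \<circ> g) id)"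

end

theory Submission
  imports Defs
begin


lemma adj_dims[simp]: "dim_row (mat_adjoint A) = dim_col A" "dim_col (mat_adjoint A) = dim_row A"
  unfolding mat_adjoint_def by simp_all
lemma adj_index[simp]: "i < dim_col A \<Longrightarrow> j < dim_row A \<Longrightarrow> mat_adjoint A $$ (i,j) = cnj (A $$ (j,i))"
  unfolding mat_adjoint_def by (subst mat_of_rows_index) auto
lemma adj_carrier[simp]: "A \<in> carrier_mat n m \<Longrightarrow> mat_adjoint A \<in> carrier_mat m n"
  unfolding carrier_mat_def by simp

lemma row_col: "A \<in> carrier_mat n m \<Longrightarrow> B \<in> carrier_mat m k \<Longrightarrow> i < n \<Longrightarrow> j < k \<Longrightarrow>
  Matrix.row A i \<bullet> col B j = (\<Sum>l<m. A $$ (i,l) * B $$ (l,j))"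
  by (simp add: scalar_prod_def atLeast0LessThan)

lemma mult_entry: "A \<in> carrier_mat n m \<Longrightarrow> B \<in> carrier_mat m k \<Longrightarrow> i < n \<Longrightarrow> j < k \<Longrightarrow>
  (A * B) $$ (i,j) = (\<Sum>l<m. A $$ (i,l) * B $$ (l,j))"
  by (simp add: row_col)

lemma adj_mult: fixes A B :: "complex mat" assumes AB: "A \<in> carrier_mat n m" "B \<in> carrier_mat m k"
  shows "mat_adjoint (A * B) = mat_adjoint B * mat_adjoint A"
proof (rule eq_matI)
  fix i j assume ij: "i < dim_row (mat_adjoint B * mat_adjoint A)" "j < dim_col (mat_adjoint B * mat_adjoint A)"
  hence ij': "i < k" "j < n" using AB by auto
  have "mat_adjoint (A * B) $$ (i,j) = cnj (\<Sum>l<m. A $$ (j,l) * B $$ (l,i))"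
    using ij' AB by (simp add: row_col[OF AB])
  also have "\<dots> = (\<Sum>l<m. cnj (B $$ (l,i)) * cnj (A $$ (j,l)))"
    by (simp add: mult.commute)
  also have "\<dots> = (mat_adjoint B * mat_adjoint A) $$ (i,j)"
    using ij' AB by (subst mult_entry[of _ k m _ n]) auto
  finally show "mat_adjoint (A * B) $$ (i,j) = (mat_adjoint B * mat_adjoint A) $$ (i,j)" .
qed (use AB in simp_all)

lemma adj_one[simp]: "mat_adjoint (1\<^sub>m n :: complex mat) = 1\<^sub>m n"
  by (rule eq_matI) auto

definition tr :: "complex mat \<Rightarrow> complex" where "tr A = (\<Sum>i<dim_row A. A $$ (i,i))"

lemma tr_mult_comm: assumes "A \<in> carrier_mat n m" "B \<in> carrier_mat m n"
  shows "tr (A * B) = tr (B * A)"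
proof -
  have "tr (A * B) = (\<Sum>i<n. \<Sum>k<m. A $$ (i,k) * B $$ (k,i))"
    unfolding tr_def using assms by (intro sum.cong) (auto simp: mult_entry simp del: index_mult_mat simp add: index_mult_mat(2,3))
  also have "\<dots> = (\<Sum>k<m. \<Sum>i<n. A $$ (i,k) * B $$ (k,i))"
    by (rule sum.swap)
  also have "\<dots> = tr (B * A)"
    unfolding tr_def using assms by (intro sum.cong) (auto simp: mult_entry mult.commute simp del: index_mult_mat simp add: index_mult_mat(2,3))
  finally show ?thesis .
qed
lemma tr_add: assumes "A \<in> carrier_mat n n" "B \<in> carrier_mat n n" shows "tr (A + B) = tr A + tr B"
proof -
  have "tr (A + B) = (\<Sum>i<n. A $$ (i,i) + B $$ (i,i))" unfolding tr_def using assms by (intro sum.cong) auto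
  also have "\<dots> = tr A + tr B" unfolding tr_def sum.distrib using assms by simp
  finally show ?thesis .
qed
lemma tr_minus: assumes "A \<in> carrier_mat n n" "B \<in> carrier_mat n n" shows "tr (A - B) = tr A - tr B"
proof -
  have "tr (A - B) = (\<Sum>i<n. A $$ (i,i) - B $$ (i,i))" unfolding tr_def using assms by (intro sum.cong) auto
  also have "\<dots> = tr A - tr B" unfolding tr_def sum_subtractf using assms by simp
  finally show ?thesis .
qed
lemma tr_smult: assumes "A \<in> carrier_mat n n" shows "tr (c \<cdot>\<^sub>m A) = c * tr A"
proof -
  have "tr (c \<cdot>\<^sub>m A) = (\<Sum>i<n. c * A $$ (i,i))" unfolding tr_def using assms by (intro sum.cong) auto
  also have "\<dots> = c * tr A" unfolding tr_def sum_distrib_left using assms by simp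
  finally show ?thesis .
qed
lemma tr_one[simp]: "tr (1\<^sub>m n) = of_nat n"
proof -
  have "tr (1\<^sub>m n) = (\<Sum>i<n. 1)" unfolding tr_def by (intro sum.cong) auto
  thus ?thesis by simp
qed
lemma tr_zero[simp]: "tr (0\<^sub>m n n) = 0"
proof -
  have "tr (0\<^sub>m n n) = (\<Sum>i<n. 0)" unfolding tr_def by (intro sum.cong) auto
  thus ?thesis by simp
qed
lemma triangularize: fixes A :: "complex mat" assumes A: "A \<in> carrier_mat n n"
  shows "\<exists>B P Q. B \<in> carrier_mat n n \<and> P \<in> carrier_mat n n \<and> Q \<in> carrier_mat n n \<and>
     upper_triangular B \<and> P * Q = 1\<^sub>m n \<and> Q * P = 1\<^sub>m n \<and> A = P * B * Q"
proof -
  from char_poly_factorized[OF A] obtain as where c: "char_poly A = (\<Prod>a\<leftarrow>as. [:- a, 1:])" by blast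
  obtain B P Q where s: "schur_decomposition A as = (B,P,Q)" using prod_cases3 by blast
  note sd = schur_decomposition[OF A c s]
  have w: "similar_mat_wit A B P Q" and u: "upper_triangular B" using sd by blast+
  have "{A, B, P, Q} \<subseteq> carrier_mat n n \<and> P * Q = 1\<^sub>m n \<and> Q * P = 1\<^sub>m n \<and> A = P * B * Q"
    using w unfolding similar_mat_wit_def Let_def carrier_matD(1)[OF A] by blast
  thus ?thesis using u by blast
qed


lemma tri_idem_zero:
  fixes B :: "complex mat"
  assumes B: "B \<in> carrier_mat n n" "upper_triangular B" "B * B = B"
    and z: "\<And>k. a \<le> k \<Longrightarrow> k < b \<Longrightarrow> B $$ (k,k) = 0" and bn: "b \<le> n"
  shows "a \<le> i \<Longrightarrow> i \<le> j \<Longrightarrow> j < b \<Longrightarrow> B $$ (i,j) = 0"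
proof (induction "j - i" arbitrary: i j rule: less_induct)
  case less
  have "B $$ (i,j) = (B * B) $$ (i,j)" using B(3) by simp
  also have "\<dots> = (\<Sum>l<n. B $$ (i,l) * B $$ (l,j))"
    using B(1) less bn by (simp add: row_col)
  also have "\<dots> = 0"
  proof (rule sum.neutral, intro ballI)
    fix l assume l: "l \<in> {..<n}"
    show "B $$ (i,l) * B $$ (l,j) = 0"
    proof -
      consider "l < i" | "l = i" | "j < l" | "l = j" | "i < l \<and> l < j" by linarith
      thus ?thesis
      proof cases
        case 1 thus ?thesis using B less bn by (subst upper_triangularD[OF B(2)]) auto
      next
        case 2 thus ?thesis using z less by auto
      next
        case 3 thus ?thesis using B less bn l by (subst upper_triangularD[OF B(2), of j l]) auto
      next
        case 4 thus ?thesis using z less by auto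
      next
        case 5 thus ?thesis using less(1)[of l i] less(2-4) by auto
      qed
    qed
  qed
  finally show ?case .
qed

lemma idem_struct:
  fixes P :: "complex mat" assumes P: "P \<in> carrier_mat n n" "P * P = P"
  shows "\<exists>B S T. B \<in> carrier_mat n n \<and> S \<in> carrier_mat n n \<and> T \<in> carrier_mat n n \<and>
     upper_triangular B \<and> B * B = B \<and> T * S = 1\<^sub>m n \<and> P = S * B * T \<and> tr P = tr B \<and>
     (\<forall>i<n. B $$ (i,i) = 0 \<or> B $$ (i,i) = 1)"
proof -
  obtain B S T where BST: "B \<in> carrier_mat n n" "S \<in> carrier_mat n n" "T \<in> carrier_mat n n"
    "upper_triangular B" "S * T = 1\<^sub>m n" "T * S = 1\<^sub>m n" "P = S * B * T"
    using triangularize[OF P(1)] by blast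
  have B1: "B = T * P * S"
  proof -
    have "T * P * S = T * (S * B * T) * S" by (simp only: BST(7))
    also have "\<dots> = (T * S) * B * (T * S)" using BST(1-3) by (simp add: assoc_mult_mat[of _ n n _ n _ n])
    also have "\<dots> = B" using BST(1) by (simp add: BST(6))
    finally show ?thesis by simp
  qed
  have BB: "B * B = B"
  proof -
    have "B * B = T * P * (S * T) * P * S" unfolding B1 using BST(1-3) P(1) by (simp add: assoc_mult_mat[of _ n n _ n _ n])
    also have "\<dots> = T * (P * P) * S" unfolding BST(5) using BST(1-3) P(1) by (simp add: assoc_mult_mat[of _ n n _ n _ n])
    also have "\<dots> = B" unfolding P(2) B1 ..
    finally show ?thesis .
  qed
  have trP: "tr P = tr B"
  proof -
    have "tr P = tr (S * (B * T))" by (simp only: BST(7) assoc_mult_mat[OF BST(2,1,3)])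
    also have "\<dots> = tr ((B * T) * S)" using BST by (intro tr_mult_comm) auto
    also have "\<dots> = tr B" by (simp only: assoc_mult_mat[OF BST(1,3,2)] BST(6) right_mult_one_mat[OF BST(1)])
    finally show ?thesis .
  qed
  have diag: "B $$ (i,i) = 0 \<or> B $$ (i,i) = 1" if i: "i < n" for i
  proof -
    have "B $$ (i,i) = (B * B) $$ (i,i)" using BB by simp
    also have "\<dots> = (\<Sum>l<n. B $$ (i,l) * B $$ (l,i))"
      using BST i by (simp add: row_col)
    also have "\<dots> = B $$ (i,i) * B $$ (i,i) + (\<Sum>l\<in>{..<n} - {i}. B $$ (i,l) * B $$ (l,i))"
      using i by (subst sum.remove[of _ i]) auto
    also have "(\<Sum>l\<in>{..<n} - {i}. B $$ (i,l) * B $$ (l,i)) = 0"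
    proof (rule sum.neutral, intro ballI)
      fix l assume l: "l \<in> {..<n} - {i}"
      show "B $$ (i,l) * B $$ (l,i) = 0"
      proof (cases "l < i")
        case True thus ?thesis using BST i by (subst upper_triangularD[OF BST(4)]) auto
      next
        case False thus ?thesis using BST i l by (subst upper_triangularD[OF BST(4), of i l]) auto
      qed
    qed
    finally have e: "B $$ (i,i) = B $$ (i,i) * B $$ (i,i)" by simp
    have "B $$ (i,i) * (B $$ (i,i) - 1) = 0" using e by (simp add: right_diff_distrib)
    thus ?thesis by auto
  qed
  show ?thesis by (intro exI[of _ B] exI[of _ S] exI[of _ T]) (use BST BB trP diag in auto)
qed

lemma sum01_card:
  fixes f :: "nat \<Rightarrow> complex"
  assumes "\<forall>i<n. f i = 0 \<or> f i = 1"
  shows "(\<Sum>i<n. f i) = of_nat (card {i\<in>{..<n}. f i = 1})"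
proof -
  have "(\<Sum>i<n. f i) = (\<Sum>i<n. if f i = 1 then 1 else 0)"
    using assms by (intro sum.cong) auto
  also have "\<dots> = (\<Sum>i\<in>{i\<in>{..<n}. f i = 1}. 1)"
    by (subst sum.inter_filter) auto
  also have "\<dots> = of_nat (card {i\<in>{..<n}. f i = 1})" by simp
  finally show ?thesis .
qed

lemma idem_tr_nat:
  fixes P :: "complex mat" assumes P: "P \<in> carrier_mat n n" "P * P = P"
  shows "\<exists>k\<le>n. tr P = of_nat k"
proof -
  obtain B S T where BST: "B \<in> carrier_mat n n" "tr P = tr B" "\<forall>i<n. B $$ (i,i) = 0 \<or> B $$ (i,i) = 1"
    using idem_struct[OF P] by blast
  have "tr P = of_nat (card {i\<in>{..<n}. B $$ (i,i) = 1})"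
    using BST sum01_card[of n "\<lambda>i. B $$ (i,i)"] by (simp add: tr_def)
  moreover have "card {i\<in>{..<n}. B $$ (i,i) = 1} \<le> n"
    by (rule order.trans[OF card_mono[of "{..<n}"]]) auto
  ultimately show ?thesis by blast
qed

lemma idem_tr0:
  fixes P :: "complex mat" assumes P: "P \<in> carrier_mat n n" "P * P = P" and t: "tr P = 0"
  shows "P = 0\<^sub>m n n"
proof -
  obtain B S T where BST: "B \<in> carrier_mat n n" "S \<in> carrier_mat n n" "T \<in> carrier_mat n n"
     "upper_triangular B" "B * B = B" "P = S * B * T" "tr P = tr B"
     "\<forall>i<n. B $$ (i,i) = 0 \<or> B $$ (i,i) = 1"
    using idem_struct[OF P] by blast
  have "of_nat (card {i\<in>{..<n}. B $$ (i,i) = 1}) = (0::complex)"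
    using BST t sum01_card[of n "\<lambda>i. B $$ (i,i)"] by (simp add: tr_def)
  hence "card {i\<in>{..<n}. B $$ (i,i) = 1} = 0" by simp
  hence "{i\<in>{..<n}. B $$ (i,i) = 1} = {}" by simp
  hence z: "\<And>k. 0 \<le> k \<Longrightarrow> k < n \<Longrightarrow> B $$ (k,k) = 0" using BST(8) by blast
  have "B = 0\<^sub>m n n"
  proof (rule eq_matI)
    fix i j assume ij: "i < dim_row (0\<^sub>m n n :: complex mat)" "j < dim_col (0\<^sub>m n n :: complex mat)"
    show "B $$ (i,j) = 0\<^sub>m n n $$ (i,j)"
    proof (cases "i \<le> j")
      case True
      have "B $$ (i,j) = 0" by (rule tri_idem_zero[OF BST(1,4,5) z]) (use ij True in auto)
      thus ?thesis using ij by simp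
    next
      case False thus ?thesis using ij BST by (subst upper_triangularD[OF BST(4)]) auto
    qed
  qed (use BST in auto)
  thus ?thesis using BST by simp
qed

lemma idem_tr1:
  fixes P :: "complex mat" assumes P: "P \<in> carrier_mat n n" "P * P = P" and t: "tr P = 1"
  shows "\<exists>x y. \<forall>a<n. \<forall>b<n. P $$ (a,b) = x a * y b"
proof -
  obtain B S T where BST: "B \<in> carrier_mat n n" "S \<in> carrier_mat n n" "T \<in> carrier_mat n n"
     "upper_triangular B" "B * B = B" "P = S * B * T" "tr P = tr B"
     "\<forall>i<n. B $$ (i,i) = 0 \<or> B $$ (i,i) = 1"
    using idem_struct[OF P] by blast
  have "of_nat (card {i\<in>{..<n}. B $$ (i,i) = 1}) = (1::complex)"
    using BST t sum01_card[of n "\<lambda>i. B $$ (i,i)"] by (simp add: tr_def)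
  hence "card {i\<in>{..<n}. B $$ (i,i) = 1} = 1" by (metis of_nat_1 of_nat_eq_iff)
  then obtain k where k: "{i\<in>{..<n}. B $$ (i,i) = 1} = {k}" by (rule card_1_singletonE)
  hence kn: "k < n" and Bkk: "B $$ (k,k) = 1" by auto
  have dz: "B $$ (i,i) = 0" if "i < n" "i \<noteq> k" for i using k BST(8) that by blast
  have Bfac: "B $$ (i,j) = B $$ (i,k) * B $$ (k,j)" if ij: "i < n" "j < n" for i j
  proof -
    have lo: "B $$ (i,j) = 0" if "i \<le> j" "j < k" for i j
      using tri_idem_zero[OF BST(1,4,5), of 0 k i j] dz kn that by force
    have hi: "B $$ (i,j) = 0" if "k < i" "i \<le> j" "j < n" for i j
      using tri_idem_zero[OF BST(1,4,5), of "Suc k" n i j] dz kn that by force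
    have tri: "B $$ (i,j) = 0" if "j < i" "i < n" for i j
      using BST that by (subst upper_triangularD[OF BST(4)]) auto
    consider "i = k" | "j = k" | "i < k" "j < k" | "k < i" "k < j" | "i < k" "k < j" | "k < i" "j < k"
      by linarith
    thus ?thesis
    proof cases
      case 1 thus ?thesis using Bkk by simp
    next
      case 2 thus ?thesis using Bkk by simp
    next
      case 3 thus ?thesis using lo tri ij kn by (cases "i \<le> j") auto
    next
      case 4 thus ?thesis using hi tri ij kn by (cases "i \<le> j") auto
    next
      case 5
      have "B $$ (i,j) = (B * B) $$ (i,j)" using BST by simp
      also have "\<dots> = (\<Sum>l<n. B $$ (i,l) * B $$ (l,j))"
        using BST(1) ij by (simp add: row_col)
      also have "\<dots> = B $$ (i,k) * B $$ (k,j) + (\<Sum>l\<in>{..<n} - {k}. B $$ (i,l) * B $$ (l,j))"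
        using kn by (subst sum.remove[of _ k]) auto
      also have "(\<Sum>l\<in>{..<n} - {k}. B $$ (i,l) * B $$ (l,j)) = 0"
      proof (rule sum.neutral, intro ballI)
        fix l assume l: "l \<in> {..<n} - {k}"
        show "B $$ (i,l) * B $$ (l,j) = 0"
        proof (cases "l < k")
          case True thus ?thesis using lo tri 5 l ij by (cases "i \<le> l") auto
        next
          case False thus ?thesis using hi tri 5 l ij by (cases "l \<le> j") auto
        qed
      qed
      finally show ?thesis by simp
    next
      case 6 thus ?thesis using tri ij kn by auto
    qed
  qed
  define x where "x a = (\<Sum>i<n. S $$ (a,i) * B $$ (i,k))" for a
  define y where "y b = (\<Sum>j<n. B $$ (k,j) * T $$ (j,b))" for b
  have "P $$ (a,b) = x a * y b" if ab: "a < n" "b < n" for a b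
  proof -
    have "P $$ (a,b) = (S * B * T) $$ (a,b)" by (simp only: BST(6))
    also have "\<dots> = (\<Sum>j<n. (S * B) $$ (a,j) * T $$ (j,b))"
      by (rule mult_entry) (use BST ab in auto)
    also have "\<dots> = (\<Sum>j<n. (\<Sum>i<n. S $$ (a,i) * B $$ (i,j)) * T $$ (j,b))"
      by (intro sum.cong refl) (use BST(1-3) ab in \<open>simp add: row_col\<close>)
    also have "\<dots> = (\<Sum>j<n. x a * B $$ (k,j) * T $$ (j,b))"
    proof (intro sum.cong refl)
      fix j assume j: "j \<in> {..<n}"
      have "(\<Sum>i<n. S $$ (a,i) * B $$ (i,j)) = (\<Sum>i<n. S $$ (a,i) * B $$ (i,k) * B $$ (k,j))"
        using j by (intro sum.cong refl) (simp add: Bfac mult.assoc)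
      also have "\<dots> = x a * B $$ (k,j)" unfolding x_def by (simp add: sum_distrib_right)
      finally show "(\<Sum>i<n. S $$ (a,i) * B $$ (i,j)) * T $$ (j,b) = x a * B $$ (k,j) * T $$ (j,b)" by simp
    qed
    also have "\<dots> = x a * y b" unfolding y_def by (simp add: sum_distrib_left mult.assoc)
    finally show ?thesis .
  qed
  thus ?thesis by blast
qed


lemma sum_single: "(i::nat) < n \<Longrightarrow> (\<And>l. l < n \<Longrightarrow> l \<noteq> i \<Longrightarrow> f l = 0) \<Longrightarrow> (\<Sum>l<n. f l) = (f i::complex)"
  by (subst sum.remove[of _ i]) (auto intro!: sum.neutral)
lemma sum_delta_l: "(i::nat) < n \<Longrightarrow> (\<Sum>l<n. (if i = l then 1 else 0) * g l) = (g i :: complex)"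
  by (subst sum_single[of i]) auto
lemma sum_delta_r: "(j::nat) < n \<Longrightarrow> (\<Sum>l<n. g l * (if l = j then 1 else 0)) = (g j :: complex)"
  by (subst sum_single[of j]) auto

lemma smult_smult_m: "a \<cdot>\<^sub>m (b \<cdot>\<^sub>m A) = (a * b :: complex) \<cdot>\<^sub>m A"
  by (rule eq_matI) auto

lemma one_minus_mult:
  fixes E F :: "complex mat" assumes EF: "E \<in> carrier_mat n n" "F \<in> carrier_mat n n"
  shows "(1\<^sub>m n - E) * (1\<^sub>m n - F) = 1\<^sub>m n - E - F + E * F"
proof (rule eq_matI)
  fix i j assume ij: "i < dim_row (1\<^sub>m n - E - F + E * F)" "j < dim_col (1\<^sub>m n - E - F + E * F)"
  hence ij': "i < n" "j < n" using EF by auto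
  have "((1\<^sub>m n - E) * (1\<^sub>m n - F)) $$ (i,j) = (\<Sum>l<n. ((if i = l then 1 else 0) - E $$ (i,l)) * ((if l = j then 1 else 0) - F $$ (l,j)))"
    using ij' EF by (subst mult_entry[of _ n n _ n]) auto
  also have "\<dots> = (\<Sum>l<n. (if i = l then 1 else 0) * (if l = j then 1 else 0)) - (\<Sum>l<n. (if i = l then 1 else 0) * F $$ (l,j))
     - (\<Sum>l<n. E $$ (i,l) * (if l = j then 1 else 0)) + (\<Sum>l<n. E $$ (i,l) * F $$ (l,j))"
    by (simp add: algebra_simps sum.distrib sum_subtractf)
  also have "\<dots> = (if i = j then 1 else 0) - F $$ (i,j) - E $$ (i,j) + (E * F) $$ (i,j)"
    using ij' EF by (simp add: sum_delta_l sum_delta_r row_col[of _ n n _ n])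
  also have "\<dots> = (1\<^sub>m n - E - F + E * F) $$ (i,j)" using ij' EF by simp
  finally show "((1\<^sub>m n - E) * (1\<^sub>m n - F)) $$ (i,j) = (1\<^sub>m n - E - F + E * F) $$ (i,j)" .
qed (use EF in auto)

definition Pr :: "nat \<Rightarrow> complex mat \<Rightarrow> complex mat" where "Pr n E = (1/2) \<cdot>\<^sub>m (1\<^sub>m n - E)"

lemma Pr_carrier[simp]: "E \<in> carrier_mat n n \<Longrightarrow> Pr n E \<in> carrier_mat n n"
  unfolding Pr_def carrier_mat_def by simp

lemma Pr_mult:
  fixes E F :: "complex mat" assumes EF: "E \<in> carrier_mat n n" "F \<in> carrier_mat n n"
  shows "Pr n E * Pr n F = (1/4) \<cdot>\<^sub>m (1\<^sub>m n - E - F + E * F)"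
proof -
  have "Pr n E * Pr n F = (1/2 * (1/2)) \<cdot>\<^sub>m ((1\<^sub>m n - E) * (1\<^sub>m n - F))"
  proof -
    have c: "1\<^sub>m n - E \<in> carrier_mat n n" "1\<^sub>m n - F \<in> carrier_mat n n" using EF by (simp_all add: minus_carrier_mat)
    show ?thesis unfolding Pr_def
      by (simp only: mult_smult_assoc_mat[OF c(1) smult_carrier_mat[OF c(2)]] mult_smult_distrib[OF c] smult_smult_m)
  qed
  thus ?thesis using one_minus_mult[OF EF] by simp
qed

lemma Pr_entry: "E \<in> carrier_mat n n \<Longrightarrow> i < n \<Longrightarrow> j < n \<Longrightarrow>
   Pr n E $$ (i,j) = ((if i = j then 1 else 0) - E $$ (i,j)) / 2"
  unfolding Pr_def by simp

lemma Pr_idem: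
  fixes E :: "complex mat" assumes E: "E \<in> carrier_mat n n" "E * E = 1\<^sub>m n"
  shows "Pr n E * Pr n E = Pr n E"
proof -
  have "Pr n E * Pr n E = (1/4) \<cdot>\<^sub>m (1\<^sub>m n - E - E + 1\<^sub>m n)" using Pr_mult[OF E(1) E(1)] E(2) by simp
  also have "\<dots> = Pr n E" unfolding Pr_def using E by (intro eq_matI) auto
  finally show ?thesis .
qed

lemma tr_Pr: assumes E: "E \<in> carrier_mat n n" shows "tr (Pr n E) = (of_nat n - tr E) / 2"
proof -
  have c: "1\<^sub>m n - E \<in> carrier_mat n n" using E by (simp add: minus_carrier_mat)
  show ?thesis unfolding Pr_def tr_smult[OF c] tr_minus[OF one_carrier_mat E] by simp
qed

lemma invol_tr:
  fixes M :: "complex mat" assumes M: "M \<in> carrier_mat n n" "M * M = 1\<^sub>m n"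
  shows "tr M \<in> (\<lambda>k. of_nat n - 2 * of_nat k) ` {..n}"
proof -
  obtain k where k: "k \<le> n" "tr (Pr n M) = of_nat k"
    using idem_tr_nat[OF Pr_carrier[OF M(1)] Pr_idem[OF M]] by blast
  hence "tr M = of_nat n - 2 * of_nat k" using tr_Pr[OF M(1)] by (simp add: field_simps)
  thus ?thesis using k by auto
qed


lemma topspace_mat_top[simp]: "topspace (mat_top n) = carrier_mat n n"
  unfolding mat_top_def topspace_pullback_topology by simp

lemma entry_cont: assumes "i < n" "j < n"
  shows "continuous_map (mat_top n) euclidean (\<lambda>A. A $$ (i,j))"
proof -
  have "continuous_map (mat_top n) euclidean ((\<lambda>f. f (i,j)) \<circ> (\<lambda>A (ij::nat \<times> nat). if fst ij < n \<and> snd ij < n then A $$ ij else (0::complex)))"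
    unfolding mat_top_def by (rule continuous_map_pullback) simp
  moreover have "((\<lambda>f. f (i,j)) \<circ> (\<lambda>A (ij::nat \<times> nat). if fst ij < n \<and> snd ij < n then A $$ ij else (0::complex))) = (\<lambda>A. A $$ (i,j))"
    using assms by (simp add: o_def)
  ultimately show ?thesis by simp
qed

lemma trace_rigid:
  assumes hom: "homotopic_to_id ro rm" and g: "g \<in> GLm n" "g * g = 1\<^sub>m n"
  shows "tr (rm n g) = tr g"
proof -
  from hom obtain H :: "real \<Rightarrow> nat \<Rightarrow> complex mat \<Rightarrow> complex mat" where
    H1: "\<forall>t\<in>{0..1}. GL_functor (H t)" and
    H2: "\<forall>n. \<forall>A\<in>GLm n. H 0 n A = rm n A \<and> H 1 n A = A" and
    H3: "\<forall>n. continuous_map (prod_topology (top_of_set {0..1}) (subtopology (mat_top n) (GLm n)))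
                (mat_top n) (\<lambda>(t, A). H t n A)"
    unfolding homotopic_to_id_def by blast
  define f where "f t = (\<Sum>i<n. H t n g $$ (i,i))" for t
  have carr: "H t n g \<in> carrier_mat n n" if t: "t \<in> {0..1}" for t
    using H1 t g unfolding GL_functor_def GLm_def by blast
  have inS: "f t \<in> (\<lambda>k. of_nat n - 2 * of_nat k) ` {..n}" if t: "t \<in> {0..1}" for t
  proof -
    have "H t n (g * g) = H t n g * H t n g" "H t n (1\<^sub>m n) = 1\<^sub>m n"
      using H1 t g unfolding GL_functor_def by blast+
    hence "H t n g * H t n g = 1\<^sub>m n" using g by simp
    from invol_tr[OF carr[OF t] this] show ?thesis
      using carr[OF t] unfolding f_def tr_def by simp
  qed
  have cm: "continuous_map (top_of_set {0..1}) (mat_top n) (\<lambda>t. H t n g)"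
  proof -
    have "continuous_map (top_of_set {0..1}) (prod_topology (top_of_set {0..1}) (subtopology (mat_top n) (GLm n))) (\<lambda>t. (t, g))"
      using g by (intro continuous_map_pairedI) (auto simp: GLm_def)
    from continuous_map_compose[OF this H3[rule_format, of n]] show ?thesis by (simp add: o_def)
  qed
  have "continuous_map (top_of_set {0..1}) euclidean f"
    unfolding f_def
    by (intro continuous_map_sum finite_lessThan continuous_map_compose[OF cm entry_cont, unfolded o_def]) auto
  hence cont: "continuous_on {0..1} f" by simp
  have fin: "finite (f ` {0..1})"
    by (rule finite_subset[of _ "(\<lambda>k. of_nat n - 2 * of_nat k) ` {..n}"]) (use inS in auto)
  have "f constant_on {0..1::real}"
    using continuous_finite_range_constant_eq[of "{0..1::real}", THEN iffD1, OF connected_Icc] cont fin by blast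
  hence "f 0 = f 1" unfolding constant_on_def by force
  moreover have "f 0 = tr (rm n g)" using H2 g carr[of 0] unfolding f_def tr_def by force
  moreover have "f 1 = tr g" using H2 g carr[of 1] unfolding f_def tr_def by force
  ultimately show ?thesis by simp
qed


definition dg :: "nat \<Rightarrow> (nat \<Rightarrow> complex) \<Rightarrow> complex mat" where
  "dg n f = mat n n (\<lambda>(a,b). if a = b then f a else 0)"

lemma dg_carrier[simp]: "dg n f \<in> carrier_mat n n" unfolding dg_def by simp
lemma dg_dims[simp]: "dim_row (dg n f) = n" "dim_col (dg n f) = n" unfolding dg_def by simp_all
lemma dg_index[simp]: "a < n \<Longrightarrow> b < n \<Longrightarrow> dg n f $$ (a,b) = (if a = b then f a else 0)"
  unfolding dg_def by simp

lemma dg_mult: "dg n f * dg n g = dg n (\<lambda>a. f a * g a)"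
proof (rule eq_matI)
  fix a b assume ab: "a < dim_row (dg n (\<lambda>a. f a * g a))" "b < dim_col (dg n (\<lambda>a. f a * g a))"
  hence ab': "a < n" "b < n" unfolding dg_def by auto
  have "(dg n f * dg n g) $$ (a,b) = (\<Sum>l<n. dg n f $$ (a,l) * dg n g $$ (l,b))"
    using ab' by (intro mult_entry) auto
  also have "\<dots> = dg n f $$ (a,a) * dg n g $$ (a,b)"
    using ab' by (intro sum_single) auto
  also have "\<dots> = dg n (\<lambda>a. f a * g a) $$ (a,b)" using ab' by simp
  finally show "(dg n f * dg n g) $$ (a,b) = dg n (\<lambda>a. f a * g a) $$ (a,b)" .
qed (auto simp: dg_def)

lemma dg_one: "(\<And>a. a < n \<Longrightarrow> f a = 1) \<Longrightarrow> dg n f = 1\<^sub>m n"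
  by (rule eq_matI) (auto simp: dg_def)

lemma dg_GL: assumes "\<And>a. a < n \<Longrightarrow> f a * f a = 1" shows "dg n f \<in> GLm n" "dg n f * dg n f = 1\<^sub>m n"
proof -
  show sq: "dg n f * dg n f = 1\<^sub>m n" unfolding dg_mult using assms by (intro dg_one) auto
  show "dg n f \<in> GLm n" unfolding GLm_def invertible_mat_def inverts_mat_def
    using sq by (auto simp: square_mat.simps intro!: exI[of _ "dg n f"])
qed

lemma tr_dg: "tr (dg n f) = (\<Sum>a<n. f a)"
  unfolding tr_def dg_def by (intro sum.cong) auto

lemma Pr_dg: "Pr n (dg n f) = dg n (\<lambda>a. (1 - f a) / 2)"
  by (rule eq_matI) (auto simp: Pr_def dg_def)

definition sgn1 :: "nat \<Rightarrow> nat \<Rightarrow> complex" where "sgn1 i a = (if a = i then -1 else 1)"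

definition ed :: "nat \<Rightarrow> nat \<Rightarrow> complex mat" where "ed n i = dg n (sgn1 i)"

lemma ed_GL: "ed n i \<in> GLm n" "ed n i * ed n i = 1\<^sub>m n"
  unfolding ed_def by (rule dg_GL; simp add: sgn1_def)+

lemma ed_comm: "ed n i * ed n j = ed n j * ed n i"
  unfolding ed_def dg_mult by (simp add: mult.commute)

lemma ed_prod_GL: "ed n i * ed n j \<in> GLm n" "(ed n i * ed n j) * (ed n i * ed n j) = 1\<^sub>m n"
proof -
  have e: "ed n i * ed n j = dg n (\<lambda>a. sgn1 i a * sgn1 j a)" unfolding ed_def dg_mult ..
  show "ed n i * ed n j \<in> GLm n" "(ed n i * ed n j) * (ed n i * ed n j) = 1\<^sub>m n"
    unfolding e by (rule dg_GL; simp add: sgn1_def)+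
qed

lemma Pr_ed: "Pr n (ed n i) = dg n (\<lambda>a. if a = i then 1 else 0)"
  unfolding ed_def Pr_dg by (intro arg_cong[where f = "dg n"]) (auto simp: sgn1_def)

lemma tr_Pr_ed: "i < n \<Longrightarrow> tr (Pr n (ed n i)) = 1"
  unfolding Pr_ed tr_dg by (subst sum_single[of i]) auto

lemma Pr_ed_mult: "i \<noteq> j \<Longrightarrow> tr (Pr n (ed n i) * Pr n (ed n j)) = 0"
  unfolding Pr_ed dg_mult tr_dg by (intro sum.neutral) auto

definition tau :: "nat \<Rightarrow> nat \<Rightarrow> nat \<Rightarrow> nat" where
  "tau i j a = (if a = i then j else if a = j then i else a)"

lemma tau_tau[simp]: "tau i j (tau i j a) = a" unfolding tau_def by auto
lemma tau_lt[simp]: "i < n \<Longrightarrow> j < n \<Longrightarrow> a < n \<Longrightarrow> tau i j a < n" unfolding tau_def by auto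

definition sw :: "nat \<Rightarrow> nat \<Rightarrow> nat \<Rightarrow> complex mat" where
  "sw n i j = mat n n (\<lambda>(a,b). if b = tau i j a then 1 else 0)"

lemma sw_carrier[simp]: "sw n i j \<in> carrier_mat n n" unfolding sw_def by simp
lemma sw_dims[simp]: "dim_row (sw n i j) = n" "dim_col (sw n i j) = n" unfolding sw_def by simp_all

lemma sw_left: assumes "A \<in> carrier_mat n n" "i < n" "j < n" "a < n" "b < n"
  shows "(sw n i j * A) $$ (a,b) = A $$ (tau i j a, b)"
proof -
  have "(sw n i j * A) $$ (a,b) = (\<Sum>l<n. sw n i j $$ (a,l) * A $$ (l,b))"
    using assms by (intro mult_entry) auto
  also have "\<dots> = sw n i j $$ (a, tau i j a) * A $$ (tau i j a, b)"
    using assms by (intro sum_single) (auto simp: sw_def)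
  also have "\<dots> = A $$ (tau i j a, b)" using assms by (simp add: sw_def)
  finally show ?thesis .
qed

lemma sw_right: assumes "A \<in> carrier_mat n n" "i < n" "j < n" "a < n" "b < n"
  shows "(A * sw n i j) $$ (a,b) = A $$ (a, tau i j b)"
proof -
  have "(A * sw n i j) $$ (a,b) = (\<Sum>l<n. A $$ (a,l) * sw n i j $$ (l,b))"
    using assms by (intro mult_entry) auto
  also have "\<dots> = A $$ (a, tau i j b) * sw n i j $$ (tau i j b, b)"
    using assms by (intro sum_single) (auto simp: sw_def)
  also have "\<dots> = A $$ (a, tau i j b)" using assms by (simp add: sw_def)
  finally show ?thesis .
qed

lemma sw_sq: assumes "i < n" "j < n" shows "sw n i j * sw n i j = 1\<^sub>m n"
proof (rule eq_matI)
  fix a b assume ab: "a < dim_row (1\<^sub>m n :: complex mat)" "b < dim_col (1\<^sub>m n :: complex mat)"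
  thus "(sw n i j * sw n i j) $$ (a,b) = 1\<^sub>m n $$ (a,b)"
    using assms by (subst sw_left) (auto simp: sw_def)
qed auto

lemma sw_GL: assumes "i < n" "j < n" shows "sw n i j \<in> GLm n"
  unfolding GLm_def invertible_mat_def inverts_mat_def
  using sw_sq[OF assms] by (auto simp: square_mat.simps intro!: exI[of _ "sw n i j"])

lemma sw_ed: assumes "i < n" "j < n" shows "sw n i j * ed n i * sw n i j = ed n j"
proof (rule eq_matI)
  fix a b assume ab: "a < dim_row (ed n j)" "b < dim_col (ed n j)"
  hence ab': "a < n" "b < n" by (simp_all add: ed_def)
  have "(sw n i j * ed n i * sw n i j) $$ (a,b) = (sw n i j * ed n i) $$ (a, tau i j b)"
    using assms ab' by (intro sw_right) (auto simp: ed_def)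
  also have "\<dots> = ed n i $$ (tau i j a, tau i j b)"
    using assms ab' by (intro sw_left) (auto simp: ed_def)
  also have "\<dots> = ed n j $$ (a,b)"
    using assms ab' by (auto simp: ed_def sgn1_def tau_def)
  finally show "(sw n i j * ed n i * sw n i j) $$ (a,b) = ed n j $$ (a,b)" .
qed (auto simp: ed_def)


definition qf :: "nat \<Rightarrow> complex mat \<Rightarrow> (nat \<Rightarrow> complex) \<Rightarrow> complex" where
  "qf n Hm x = (\<Sum>a<n. \<Sum>b<n. cnj (x a) * Hm $$ (a,b) * x b)"

lemma rank1_herm:
  fixes Hm :: "complex mat"
  assumes compat: "\<And>b. b < n \<Longrightarrow> (\<Sum>c<n. Hm $$ (a,c) * (x c * y b)) = (\<Sum>c<n. cnj (x c * y a) * Hm $$ (c,b))"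
    and norm: "(\<Sum>b<n. y b * x b) = 1"
  shows "(\<Sum>c<n. Hm $$ (a,c) * x c) = qf n Hm x * cnj (y a)"
proof -
  define u where "u = (\<Sum>c<n. Hm $$ (a,c) * x c)"
  have e1: "u * y b = cnj (y a) * (\<Sum>c<n. cnj (x c) * Hm $$ (c,b))" if b: "b < n" for b
  proof -
    have "u * y b = (\<Sum>c<n. Hm $$ (a,c) * (x c * y b))"
      unfolding u_def sum_distrib_right by (simp add: mult.assoc)
    also have "\<dots> = (\<Sum>c<n. cnj (x c * y a) * Hm $$ (c,b))" using compat b by simp
    also have "\<dots> = cnj (y a) * (\<Sum>c<n. cnj (x c) * Hm $$ (c,b))"
      unfolding sum_distrib_left by (intro sum.cong) (auto simp: mult_ac)
    finally show ?thesis .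
  qed
  have "u = u * (\<Sum>b<n. y b * x b)" using norm by simp
  also have "\<dots> = (\<Sum>b<n. (u * y b) * x b)" unfolding sum_distrib_left by (simp add: mult.assoc)
  also have "\<dots> = (\<Sum>b<n. cnj (y a) * (\<Sum>c<n. cnj (x c) * Hm $$ (c,b)) * x b)"
    using e1 by (intro sum.cong) auto
  also have "\<dots> = cnj (y a) * (\<Sum>b<n. \<Sum>c<n. cnj (x c) * Hm $$ (c,b) * x b)"
    unfolding sum_distrib_left sum_distrib_right by (simp add: mult.assoc)
  also have "(\<Sum>b<n. \<Sum>c<n. cnj (x c) * Hm $$ (c,b) * x b) = qf n Hm x"
    unfolding qf_def by (rule sum.swap)
  finally show ?thesis unfolding u_def by (simp add: mult.commute)
qed

lemma qf_real:
  fixes Hm :: "complex mat"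
  assumes "\<And>a b. a < n \<Longrightarrow> b < n \<Longrightarrow> cnj (Hm $$ (a,b)) = Hm $$ (b,a)"
  shows "cnj (qf n Hm x) = qf n Hm x"
proof -
  have "cnj (qf n Hm x) = (\<Sum>a<n. \<Sum>b<n. cnj (x b) * Hm $$ (b,a) * x a)"
    unfolding qf_def using assms by (auto intro!: sum.cong simp: mult_ac)
  also have "\<dots> = qf n Hm x" unfolding qf_def by (rule sum.swap)
  finally show ?thesis .
qed

lemma qf_scale: "qf n Hm (\<lambda>a. c * x a) = cnj c * c * qf n Hm x"
  unfolding qf_def sum_distrib_left by (intro sum.cong refl) (simp add: mult_ac)

definition colv :: "nat \<Rightarrow> (nat \<Rightarrow> complex) \<Rightarrow> complex mat" where
  "colv n x = mat n 1 (\<lambda>(a,_). x a)"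
definition rowv :: "nat \<Rightarrow> (nat \<Rightarrow> complex) \<Rightarrow> complex mat" where
  "rowv n y = mat 1 n (\<lambda>(_,b). y b)"

lemma colv_carrier[simp]: "colv n x \<in> carrier_mat n 1" unfolding colv_def by simp
lemma rowv_carrier[simp]: "rowv n y \<in> carrier_mat 1 n" unfolding rowv_def by simp
lemma colv_dims[simp]: "dim_row (colv n x) = n" "dim_col (colv n x) = 1" unfolding colv_def by simp_all
lemma rowv_dims[simp]: "dim_row (rowv n x) = 1" "dim_col (rowv n x) = n" unfolding rowv_def by simp_all

lemma outer_entry: "a < n \<Longrightarrow> b < n \<Longrightarrow> (colv n x * rowv n y) $$ (a,b) = x a * y b"
  by (subst mult_entry[of _ n 1 _ n]) (auto simp: colv_def rowv_def)

lemma outer_eq: assumes "P \<in> carrier_mat n n" "\<And>a b. a < n \<Longrightarrow> b < n \<Longrightarrow> P $$ (a,b) = x a * y b"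
  shows "P = colv n x * rowv n y"
  using assms by (intro eq_matI) (auto simp: outer_entry simp del: index_mult_mat simp add: index_mult_mat(2,3))

lemma mat_colv: assumes "A \<in> carrier_mat n n" shows "A * colv n x = colv n (\<lambda>a. \<Sum>c<n. A $$ (a,c) * x c)"
  by (rule eq_matI) (use assms in \<open>auto simp: mult_entry[of _ n n _ 1] colv_def simp del: index_mult_mat simp add: index_mult_mat(2,3)\<close>)

lemma rowv_mat: assumes "A \<in> carrier_mat n n" shows "rowv n y * A = rowv n (\<lambda>b. \<Sum>c<n. y c * A $$ (c,b))"
  by (rule eq_matI) (use assms in \<open>auto simp: mult_entry[of _ 1 n _ n] rowv_def simp del: index_mult_mat simp add: index_mult_mat(2,3)\<close>)

lemma qf_mat: assumes Hm: "Hm \<in> carrier_mat n n"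
  shows "(mat_adjoint (colv n x) * Hm * colv n x) $$ (0,0) = qf n Hm x"
proof -
  have "(mat_adjoint (colv n x) * Hm * colv n x) $$ (0,0) = (\<Sum>b<n. (mat_adjoint (colv n x) * Hm) $$ (0,b) * x b)"
    using Hm by (subst mult_entry[of _ 1 n _ 1]) (auto simp: colv_def)
  also have "\<dots> = (\<Sum>b<n. (\<Sum>a<n. cnj (x a) * Hm $$ (a,b)) * x b)"
    using Hm by (intro sum.cong refl, subst mult_entry[of _ 1 n _ n]) (auto simp: colv_def)
  also have "\<dots> = (\<Sum>b<n. \<Sum>a<n. cnj (x a) * Hm $$ (a,b) * x b)"
    by (simp add: sum_distrib_right)
  also have "\<dots> = qf n Hm x" unfolding qf_def by (rule sum.swap)
  finally show ?thesis .
qed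

lemma assoc5: assumes C: "C1 \<in> carrier_mat 1 n" "C2 \<in> carrier_mat n n" "C3 \<in> carrier_mat n n" "C4 \<in> carrier_mat n n" "C5 \<in> carrier_mat n 1"
  shows "C1 * C2 * C3 * (C4 * C5) = C1 * (C2 * C3 * C4) * C5"
proof -
  have m12: "C1 * C2 \<in> carrier_mat 1 n" by (rule mult_carrier_mat[OF C(1) C(2)])
  have m123: "C1 * C2 * C3 \<in> carrier_mat 1 n" by (rule mult_carrier_mat[OF m12 C(3)])
  have m23: "C2 * C3 \<in> carrier_mat n n" by (rule mult_carrier_mat[OF C(2) C(3)])
  have "C1 * C2 * C3 * (C4 * C5) = (C1 * C2 * C3 * C4) * C5"
    using assoc_mult_mat[OF m123 C(4) C(5)] by simp
  also have "C1 * C2 * C3 * C4 = C1 * (C2 * C3) * C4" using assoc_mult_mat[OF C(1-3)] by simp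
  also have "\<dots> = C1 * (C2 * C3 * C4)" using assoc_mult_mat[OF C(1) m23 C(4)] by simp
  finally show ?thesis .
qed

lemma qf_transform:
  assumes Hm: "Hm \<in> carrier_mat n n" and A: "A \<in> carrier_mat n n" and iso: "mat_adjoint A * Hm * A = Hm"
  shows "qf n Hm (\<lambda>a. \<Sum>c<n. A $$ (a,c) * x c) = qf n Hm x"
proof -
  have "mat_adjoint (A * colv n x) * Hm * (A * colv n x) = mat_adjoint (colv n x) * (mat_adjoint A * Hm * A) * colv n x"
    unfolding adj_mult[OF A colv_carrier] using Hm A by (intro assoc5) auto
  also have "\<dots> = mat_adjoint (colv n x) * Hm * colv n x" by (simp only: iso)
  finally have "(mat_adjoint (A * colv n x) * Hm * (A * colv n x)) $$ (0,0) = (mat_adjoint (colv n x) * Hm * colv n x) $$ (0,0)" by simp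
  thus ?thesis unfolding mat_colv[OF A] qf_mat[OF Hm] .
qed


lemma mult_sq_carrier[simp]: "A \<in> carrier_mat n n \<Longrightarrow> B \<in> carrier_mat n n \<Longrightarrow> A * B \<in> carrier_mat n n"
  by (rule mult_carrier_mat)

lemma GLm_carrier: "A \<in> GLm n \<Longrightarrow> A \<in> carrier_mat n n" unfolding GLm_def by simp



lemma GLm_intro: assumes A: "A \<in> carrier_mat n n" and B: "B \<in> carrier_mat n n"
  and AB: "A * B = 1\<^sub>m n" and BA: "B * A = 1\<^sub>m n" shows "A \<in> GLm n"
proof -
  have "inverts_mat A B" unfolding inverts_mat_def using A AB by simp
  moreover have "inverts_mat B A" unfolding inverts_mat_def using B BA by simp
  moreover have "square_mat A" using A by simp
  ultimately show ?thesis unfolding GLm_def invertible_mat_def using A by blast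
qed

lemma GLm_prod_invol: assumes S: "S \<in> carrier_mat n n" "S * S = 1\<^sub>m n" and D: "D \<in> carrier_mat n n" "D * D = 1\<^sub>m n"
  shows "S * D \<in> GLm n"
proof (rule GLm_intro[of _ _ "D * S"])
  show "S * D \<in> carrier_mat n n" "D * S \<in> carrier_mat n n" using S D by simp_all
  have "S * D * (D * S) = S * (D * (D * S))" using assoc_mult_mat[OF S(1) D(1) mult_sq_carrier[OF D(1) S(1)]] .
  also have "\<dots> = S * ((D * D) * S)" by (simp only: assoc_mult_mat[OF D(1) D(1) S(1)])
  also have "\<dots> = S * S" by (simp only: D(2) left_mult_one_mat[OF S(1)])
  finally show "S * D * (D * S) = 1\<^sub>m n" by (simp only: S(2))
  have "D * S * (S * D) = D * (S * (S * D))" using assoc_mult_mat[OF D(1) S(1) mult_sq_carrier[OF S(1) D(1)]] .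
  also have "\<dots> = D * ((S * S) * D)" by (simp only: assoc_mult_mat[OF S(1) S(1) D(1)])
  also have "\<dots> = D * D" by (simp only: S(2) left_mult_one_mat[OF D(1)])
  finally show "D * S * (S * D) = 1\<^sub>m n" by (simp only: D(2))
qed

lemma tr_PrPr: assumes AB: "A \<in> carrier_mat n n" "B \<in> carrier_mat n n"
  shows "tr (Pr n A * Pr n B) = (of_nat n - tr A - tr B + tr (A * B)) / 4"
proof -
  have c: "1\<^sub>m n - A \<in> carrier_mat n n" "1\<^sub>m n - A - B \<in> carrier_mat n n" "1\<^sub>m n - A - B + A * B \<in> carrier_mat n n"
    using AB by (auto simp: minus_carrier_mat)
  show ?thesis unfolding Pr_mult[OF AB] tr_smult[OF c(3)] tr_add[OF c(2) mult_sq_carrier[OF AB]]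
    tr_minus[OF c(1) AB(2)] tr_minus[OF one_carrier_mat AB(1)] by simp
qed

lemma Pr_comm: assumes AB: "A \<in> carrier_mat n n" "B \<in> carrier_mat n n" and c: "A * B = B * A"
  shows "Pr n A * Pr n B = Pr n B * Pr n A"
  unfolding Pr_mult[OF AB] Pr_mult[OF AB(2,1)] c using AB by (intro eq_matI) auto

lemma idem_comm_prod: assumes PQ: "P \<in> carrier_mat n n" "Q \<in> carrier_mat n n"
  and idem: "P * P = P" "Q * Q = Q" and c: "P * Q = Q * P"
  shows "(P * Q) * (P * Q) = P * Q"
proof -
  have "(P * Q) * (P * Q) = P * (Q * P) * Q" using PQ by (simp add: assoc_mult_mat[of _ n n _ n _ n])
  also have "\<dots> = P * (P * Q) * Q" using c by simp
  also have "\<dots> = (P * P) * (Q * Q)" using PQ by (simp add: assoc_mult_mat[of _ n n _ n _ n])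
  finally show ?thesis using idem by simp
qed

lemma rank1_prod: assumes PQ: "P \<in> carrier_mat n n" "Q \<in> carrier_mat n n"
  and rP: "\<And>a b. a < n \<Longrightarrow> b < n \<Longrightarrow> P $$ (a,b) = x a * y b"
  and rQ: "\<And>a b. a < n \<Longrightarrow> b < n \<Longrightarrow> Q $$ (a,b) = x' a * y' b"
  and ab: "a < n" "b < n"
  shows "(P * Q) $$ (a,b) = x a * (\<Sum>l<n. y l * x' l) * y' b"
proof -
  have "(P * Q) $$ (a,b) = (\<Sum>l<n. P $$ (a,l) * Q $$ (l,b))" using PQ ab by (intro mult_entry) auto
  also have "\<dots> = (\<Sum>l<n. x a * (y l * x' l) * y' b)" using rP rQ ab by (intro sum.cong) (auto simp: mult_ac)
  also have "\<dots> = x a * (\<Sum>l<n. y l * x' l) * y' b" by (simp add: sum_distrib_left sum_distrib_right)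
  finally show ?thesis .
qed


lemma Pr_conj: assumes SE: "S \<in> carrier_mat n n" "E \<in> carrier_mat n n" and SS: "S * S = 1\<^sub>m n"
  shows "Pr n (S * E * S) = S * Pr n E * S"
proof -
  have c: "1\<^sub>m n - E \<in> carrier_mat n n" using SE by (simp add: minus_carrier_mat)
  have "S * Pr n E * S = (1/2) \<cdot>\<^sub>m (S * (1\<^sub>m n - E) * S)"
    unfolding Pr_def mult_smult_distrib[OF SE(1) c] mult_smult_assoc_mat[OF mult_sq_carrier[OF SE(1) c] SE(1)] ..
  also have "S * (1\<^sub>m n - E) * S = S * S - S * E * S"
    unfolding mult_minus_distrib_mat[OF SE(1) one_carrier_mat SE(2)]
    using minus_mult_distrib_mat[OF _ mult_sq_carrier[OF SE(1) SE(2)] SE(1), of S] SE by simp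
  finally show ?thesis unfolding Pr_def SS by simp
qed

lemma sum_delta_l2: "(i::nat) < n \<Longrightarrow> (\<Sum>l<n. (if l = i then 1 else 0) * g l) = (g i :: complex)"
  by (subst sum_single[of i]) auto

lemma herm_compat:
  assumes Hm: "Hm \<in> carrier_mat n n" and E: "E \<in> carrier_mat n n" and iso: "mat_adjoint E * Hm * E = Hm"
    and EE: "E * E = 1\<^sub>m n" and ab: "a < n" "b < n"
  shows "(\<Sum>c<n. Hm $$ (a,c) * Pr n E $$ (c,b)) = (\<Sum>c<n. cnj (Pr n E $$ (c,a)) * Hm $$ (c,b))"
proof -
  have aE: "mat_adjoint E \<in> carrier_mat n n" using E by simp
  have key: "mat_adjoint E * Hm = Hm * E"
  proof -
    have "mat_adjoint E * Hm = mat_adjoint E * Hm * (E * E)" using EE aE Hm by simp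
    also have "\<dots> = (mat_adjoint E * Hm * E) * E" using aE Hm E by (simp add: assoc_mult_mat[of _ n n _ n _ n])
    finally show ?thesis using iso by simp
  qed
  have "(\<Sum>c<n. Hm $$ (a,c) * Pr n E $$ (c,b)) = (\<Sum>c<n. (Hm $$ (a,c) * (if c = b then 1 else 0) - Hm $$ (a,c) * E $$ (c,b)) / 2)"
    using E ab by (intro sum.cong) (auto simp: Pr_entry algebra_simps)
  also have "\<dots> = (Hm $$ (a,b) - (Hm * E) $$ (a,b)) / 2"
    using Hm E ab by (simp add: sum_divide_distrib[symmetric] sum_subtractf sum_delta_r row_col[of _ n n _ n])
  also have "\<dots> = (Hm $$ (a,b) - (mat_adjoint E * Hm) $$ (a,b)) / 2" using key by simp
  also have "\<dots> = (\<Sum>c<n. ((if c = a then 1 else 0) * Hm $$ (c,b) - cnj (E $$ (c,a)) * Hm $$ (c,b)) / 2)"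
    using Hm E aE ab by (simp add: sum_divide_distrib[symmetric] sum_subtractf sum_delta_l2 row_col[of _ n n _ n])
  also have "\<dots> = (\<Sum>c<n. cnj (Pr n E $$ (c,a)) * Hm $$ (c,b))"
  proof (intro sum.cong refl)
    fix c assume c: "c \<in> {..<n}"
    have e: "cnj (Pr n E $$ (c,a)) = ((if c = a then 1 else 0) - cnj (E $$ (c,a))) / 2"
      using E ab c by (simp add: Pr_entry)
    show "((if c = a then 1 else 0) * Hm $$ (c,b) - cnj (E $$ (c,a)) * Hm $$ (c,b)) / 2 = cnj (Pr n E $$ (c,a)) * Hm $$ (c,b)"
      unfolding e by (simp only: times_divide_eq_left left_diff_distrib)
  qed
  finally show ?thesis .
qed

lemma qf_cong: "(\<And>a. a < n \<Longrightarrow> x a = x' a) \<Longrightarrow> qf n Hm x = qf n Hm x'"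
  unfolding qf_def by (intro sum.cong) auto


lemma main_alg:
  fixes Hm :: "complex mat" and R :: "complex mat \<Rightarrow> complex mat" and n :: nat
  assumes Hm: "Hm \<in> carrier_mat n n" and herm: "mat_adjoint Hm = Hm" and dt: "det Hm \<noteq> 0" and n0: "0 < n"
    and Rc: "\<And>A. A \<in> GLm n \<Longrightarrow> R A \<in> carrier_mat n n"
    and Riso: "\<And>A. A \<in> GLm n \<Longrightarrow> mat_adjoint (R A) * Hm * R A = Hm"
    and Rmult: "\<And>A B. A \<in> GLm n \<Longrightarrow> B \<in> GLm n \<Longrightarrow> R (A * B) = R A * R B"
    and Rone: "R (1\<^sub>m n) = 1\<^sub>m n"
    and Rtr: "\<And>g. g \<in> GLm n \<Longrightarrow> g * g = 1\<^sub>m n \<Longrightarrow> tr (R g) = tr g"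
  shows "definite_obj (n, Hm)"
proof -
  define E where "E i = R (ed n i)" for i
  define P where "P i = Pr n (E i)" for i
  have edc: "ed n i \<in> carrier_mat n n" for i using GLm_carrier[OF ed_GL(1)] .
  have Ec: "E i \<in> carrier_mat n n" for i unfolding E_def using Rc ed_GL by blast
  have EE: "E i * E i = 1\<^sub>m n" for i
  proof -
    have "E i * E i = R (ed n i * ed n i)" unfolding E_def using Rmult[OF ed_GL(1) ed_GL(1)] by simp
    thus ?thesis using ed_GL(2) Rone by simp
  qed
  have Pc: "P i \<in> carrier_mat n n" for i unfolding P_def using Ec by simp
  have Pidem: "P i * P i = P i" for i unfolding P_def by (rule Pr_idem[OF Ec EE])
  have trE: "tr (E i) = tr (ed n i)" for i unfolding E_def by (rule Rtr[OF ed_GL])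
  have trP: "tr (P i) = 1" if "i < n" for i
    unfolding P_def tr_Pr[OF Ec] trE tr_Pr[OF edc, symmetric] using tr_Pr_ed[OF that] .
  have Ecomm: "E i * E j = E j * E i" for i j
  proof -
    have "E i * E j = R (ed n i * ed n j)" unfolding E_def using Rmult[OF ed_GL(1) ed_GL(1)] by simp
    also have "\<dots> = R (ed n j * ed n i)" by (simp add: ed_comm)
    also have "\<dots> = E j * E i" unfolding E_def using Rmult[OF ed_GL(1) ed_GL(1)] by simp
    finally show ?thesis .
  qed
  have PP0: "P i * P j = 0\<^sub>m n n" if ij: "i \<noteq> j" for i j
  proof -
    have "tr (E i * E j) = tr (ed n i * ed n j)"
      unfolding E_def Rmult[OF ed_GL(1) ed_GL(1), symmetric] by (rule Rtr[OF ed_prod_GL])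
    hence "tr (P i * P j) = tr (Pr n (ed n i) * Pr n (ed n j))"
      unfolding P_def tr_PrPr[OF Ec Ec] tr_PrPr[OF edc edc] trE by simp
    hence t0: "tr (P i * P j) = 0" using Pr_ed_mult[OF ij] by simp
    have "(P i * P j) * (P i * P j) = P i * P j"
      by (rule idem_comm_prod[OF Pc Pc Pidem Pidem]) (unfold P_def, rule Pr_comm[OF Ec Ec Ecomm])
    thus ?thesis using idem_tr0[OF mult_sq_carrier[OF Pc Pc] _ t0] by simp
  qed
  have "\<forall>i. \<exists>xy :: (nat \<Rightarrow> complex) \<times> (nat \<Rightarrow> complex). i < n \<longrightarrow> (\<forall>a<n. \<forall>b<n. P i $$ (a,b) = fst xy a * snd xy b)"
  proof
    fix i show "\<exists>xy :: (nat \<Rightarrow> complex) \<times> (nat \<Rightarrow> complex). i < n \<longrightarrow> (\<forall>a<n. \<forall>b<n. P i $$ (a,b) = fst xy a * snd xy b)"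
    proof (cases "i < n")
      case True
      then obtain x y where "\<forall>a<n. \<forall>b<n. P i $$ (a,b) = x a * y b" using idem_tr1[OF Pc Pidem trP] by blast
      thus ?thesis by (intro exI[of _ "(x,y)"]) simp
    qed simp
  qed
  from choice[OF this] obtain f where f: "\<forall>i. i < n \<longrightarrow> (\<forall>a<n. \<forall>b<n. P i $$ (a,b) = fst (f i) a * snd (f i) b)" by blast
  define x where "x i = fst (f i)" for i
  define y where "y i = snd (f i)" for i
  have xy: "P i $$ (a,b) = x i a * y i b" if "i < n" "a < n" "b < n" for i a b
    using f that unfolding x_def y_def by blast
  have nz: "\<exists>a b. a < n \<and> b < n \<and> x i a \<noteq> 0 \<and> y i b \<noteq> 0" if i: "i < n" for i
  proof (rule ccontr)
    assume "\<not> ?thesis"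
    hence "P i = 0\<^sub>m n n" using xy[OF i] carrier_matD[OF Pc[of i]] by (intro eq_matI) auto
    thus False using trP[OF i] by simp
  qed
  have norm: "(\<Sum>l<n. y i l * x i l) = 1" if i: "i < n" for i
  proof -
    obtain a b where ab: "a < n" "b < n" "x i a \<noteq> 0" "y i b \<noteq> 0" using nz[OF i] by blast
    have "x i a * (\<Sum>l<n. y i l * x i l) * y i b = (P i * P i) $$ (a,b)"
      using rank1_prod[OF Pc[of i] Pc[of i] xy[OF i] xy[OF i] ab(1) ab(2)] by simp
    also have "\<dots> = x i a * 1 * y i b" using Pidem xy i ab by simp
    finally show ?thesis using ab by simp
  qed
  have orth: "(\<Sum>l<n. y i l * x j l) = 0" if ij: "i < n" "j < n" "i \<noteq> j" for i j
  proof -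
    obtain a b where ab: "a < n" "x i a \<noteq> 0" using nz[OF ij(1)] by blast
    obtain a' b' where ab': "b' < n" "y j b' \<noteq> 0" using nz[OF ij(2)] by blast
    have "x i a * (\<Sum>l<n. y i l * x j l) * y j b' = (P i * P j) $$ (a,b')"
      using rank1_prod[OF Pc[of i] Pc[of j] xy[OF ij(1)] xy[OF ij(2)] ab(1) ab'(1)] by simp
    also have "\<dots> = 0" using PP0[OF ij(3)] ab ab' by simp
    finally show ?thesis using ab ab' by simp
  qed
  have XY: "(\<Sum>i<n. x i a * y i b) = (if a = b then 1 else 0)" if ab: "a < n" "b < n" for a b
  proof -
    define X where "X = mat n n (\<lambda>(a,i). x i a)"
    define Y where "Y = mat n n (\<lambda>(i,b). y i b)"
    have Xc: "X \<in> carrier_mat n n" and Yc: "Y \<in> carrier_mat n n" unfolding X_def Y_def by simp_all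
    have "Y * X = 1\<^sub>m n"
    proof (rule eq_matI)
      fix i j assume "i < dim_row (1\<^sub>m n :: complex mat)" "j < dim_col (1\<^sub>m n :: complex mat)"
      hence ij: "i < n" "j < n" by simp_all
      have "(Y * X) $$ (i,j) = (\<Sum>l<n. y i l * x j l)"
        using ij Xc Yc by (subst mult_entry[OF Yc Xc]) (auto simp: X_def Y_def)
      also have "\<dots> = 1\<^sub>m n $$ (i,j)" using norm orth ij by (cases "i = j") auto
      finally show "(Y * X) $$ (i,j) = 1\<^sub>m n $$ (i,j)" .
    qed (use Xc Yc in auto)
    hence XY1: "X * Y = 1\<^sub>m n" by (rule mat_mult_left_right_inverse[OF Yc Xc])
    have "(\<Sum>i<n. x i a * y i b) = (X * Y) $$ (a,b)"
      using ab by (subst mult_entry[OF Xc Yc]) (auto simp: X_def Y_def intro!: sum.cong)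
    thus ?thesis using XY1 ab by simp
  qed
  define h where "h i = qf n Hm (x i)" for i
  have Eiso: "mat_adjoint (E i) * Hm * E i = Hm" for i unfolding E_def by (rule Riso[OF ed_GL(1)])
  have Hx: "(\<Sum>c<n. Hm $$ (a,c) * x i c) = h i * cnj (y i a)" if ia: "i < n" "a < n" for i a
    unfolding h_def
  proof (rule rank1_herm[OF _ norm[OF ia(1)]])
    fix b assume b: "b < n"
    have "(\<Sum>c<n. Hm $$ (a,c) * (x i c * y i b)) = (\<Sum>c<n. Hm $$ (a,c) * P i $$ (c,b))"
      using xy ia b by (intro sum.cong) auto
    also have "\<dots> = (\<Sum>c<n. cnj (P i $$ (c,a)) * Hm $$ (c,b))"
      unfolding P_def by (rule herm_compat[OF Hm Ec Eiso EE ia(2) b])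
    also have "\<dots> = (\<Sum>c<n. cnj (x i c * y i a) * Hm $$ (c,b))"
      using xy ia b by (intro sum.cong) auto
    finally show "(\<Sum>c<n. Hm $$ (a,c) * (x i c * y i b)) = (\<Sum>c<n. cnj (x i c * y i a) * Hm $$ (c,b))" .
  qed
  have Hdec: "Hm $$ (a,b) = (\<Sum>i<n. h i * cnj (y i a) * y i b)" if ab: "a < n" "b < n" for a b
  proof -
    have "Hm $$ (a,b) = (\<Sum>c<n. Hm $$ (a,c) * (if c = b then 1 else 0))" using sum_delta_r[OF ab(2)] by simp
    also have "\<dots> = (\<Sum>c<n. Hm $$ (a,c) * (\<Sum>i<n. x i c * y i b))" using XY ab by (intro sum.cong) auto
    also have "\<dots> = (\<Sum>i<n. (\<Sum>c<n. Hm $$ (a,c) * x i c) * y i b)"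
      by (simp add: sum_distrib_left sum_distrib_right mult_ac) (rule sum.swap)
    also have "\<dots> = (\<Sum>i<n. h i * cnj (y i a) * y i b)" using Hx ab by (intro sum.cong) auto
    finally show ?thesis .
  qed
  have hreal: "cnj (h i) = h i" for i
    unfolding h_def
  proof (rule qf_real)
    fix a b assume ab: "a < n" "b < n"
    have "mat_adjoint Hm $$ (b,a) = cnj (Hm $$ (a,b))" using Hm ab by simp
    thus "cnj (Hm $$ (a,b)) = Hm $$ (b,a)" using herm by simp
  qed
  have hrel: "\<exists>c. c \<noteq> 0 \<and> h i = cnj c * c * h 0" if i: "i < n" for i
  proof (cases "i = 0")
    case True thus ?thesis by (intro exI[of _ 1]) simp
  next
    case False
    define Sw where "Sw = sw n 0 i"
    have SwG: "Sw \<in> GLm n" unfolding Sw_def using sw_GL n0 i by simp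
    have Swc: "Sw \<in> carrier_mat n n" and SwSw: "Sw * Sw = 1\<^sub>m n" unfolding Sw_def using sw_sq n0 i by auto
    define Rs where "Rs = R Sw"
    have Rsc: "Rs \<in> carrier_mat n n" unfolding Rs_def using Rc[OF SwG] .
    have RsRs: "Rs * Rs = 1\<^sub>m n" unfolding Rs_def using Rmult[OF SwG SwG] SwSw Rone by simp
    have Rsiso: "mat_adjoint Rs * Hm * Rs = Hm" unfolding Rs_def by (rule Riso[OF SwG])
    have SE: "Sw * ed n 0 \<in> GLm n" by (rule GLm_prod_invol[OF Swc SwSw edc ed_GL(2)])
    have "E i = R (Sw * ed n 0 * Sw)" unfolding E_def Sw_def using sw_ed[OF n0 i] by simp
    also have "\<dots> = Rs * E 0 * Rs" unfolding Rs_def E_def using Rmult[OF SE SwG] Rmult[OF SwG ed_GL(1)] by simp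
    finally have Ei: "E i = Rs * E 0 * Rs" .
    define x' where "x' a = (\<Sum>c<n. Rs $$ (a,c) * x 0 c)" for a
    define y' where "y' b = (\<Sum>c<n. y 0 c * Rs $$ (c,b))" for b
    have P0: "P 0 = colv n (x 0) * rowv n (y 0)" by (rule outer_eq[OF Pc]) (use xy n0 in auto)
    have a1: "Rs * (colv n (x 0) * rowv n (y 0)) = Rs * colv n (x 0) * rowv n (y 0)"
      using assoc_mult_mat[OF Rsc colv_carrier rowv_carrier] by simp
    have a2: "Rs * colv n (x 0) * rowv n (y 0) * Rs = (Rs * colv n (x 0)) * (rowv n (y 0) * Rs)"
      using assoc_mult_mat[OF mult_carrier_mat[OF Rsc colv_carrier] rowv_carrier Rsc] .
    have "P i = Rs * P 0 * Rs" unfolding P_def Ei by (rule Pr_conj[OF Rsc Ec RsRs])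
    also have "\<dots> = Rs * colv n (x 0) * rowv n (y 0) * Rs" unfolding P0 a1 ..
    also have "\<dots> = (Rs * colv n (x 0)) * (rowv n (y 0) * Rs)" by (rule a2)
    also have "\<dots> = colv n x' * rowv n y'" unfolding mat_colv[OF Rsc] rowv_mat[OF Rsc] x'_def y'_def ..
    finally have Pi: "P i = colv n x' * rowv n y'" .
    have ent: "x i a * y i b = x' a * y' b" if ab: "a < n" "b < n" for a b
      using xy[OF i ab] Pi outer_entry[OF ab, of x' y'] by simp
    obtain a0 b0 where ab0: "a0 < n" "b0 < n" "x i a0 \<noteq> 0" "y i b0 \<noteq> 0" using nz[OF i] by blast
    define c where "c = y' b0 / y i b0"
    have xa: "x i a = c * x' a" if a: "a < n" for a
    proof -
      have "x i a = (x i a * y i b0) / y i b0" using ab0 by simp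
      also have "\<dots> = (x' a * y' b0) / y i b0" using ent[OF a ab0(2)] by simp
      finally show ?thesis unfolding c_def by simp
    qed
    have c0: "c \<noteq> 0" using xa[OF ab0(1)] ab0(3) by auto
    have "h i = qf n Hm (\<lambda>a. c * x' a)" unfolding h_def by (rule qf_cong) (use xa in auto)
    also have "\<dots> = cnj c * c * qf n Hm x'" by (rule qf_scale)
    also have "qf n Hm x' = h 0" unfolding h_def x'_def by (rule qf_transform[OF Hm Rsc Rsiso])
    finally show ?thesis using c0 by blast
  qed
  have "\<forall>i. \<exists>c. i < n \<longrightarrow> c \<noteq> 0 \<and> h i = cnj c * c * h 0" using hrel by blast
  from choice[OF this] obtain cc where cc: "\<forall>i. i < n \<longrightarrow> cc i \<noteq> 0 \<and> h i = cnj (cc i) * cc i * h 0" by blast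
  have h00: "h 0 \<noteq> 0"
  proof
    assume h0: "h 0 = 0"
    obtain a where a: "a < n" "x 0 a \<noteq> 0" using nz[OF n0] by blast
    have "Hm *\<^sub>v vec n (x 0) = 0\<^sub>v n"
    proof (rule eq_vecI)
      fix j assume "j < dim_vec (0\<^sub>v n :: complex vec)"
      hence j: "j < n" by simp
      have "(Hm *\<^sub>v vec n (x 0)) $ j = (\<Sum>c<n. Hm $$ (j,c) * x 0 c)"
        using Hm j by (simp add: scalar_prod_def atLeast0LessThan)
      also have "\<dots> = 0" using Hx[OF n0 j] h0 by simp
      finally show "(Hm *\<^sub>v vec n (x 0)) $ j = 0\<^sub>v n $ j" using j by simp
    qed (use Hm in simp)
    moreover have "vec n (x 0) \<noteq> 0\<^sub>v n"
    proof
      assume "vec n (x 0) = 0\<^sub>v n"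
      hence "vec n (x 0) $ a = 0\<^sub>v n $ a" by simp
      thus False using a by simp
    qed
    moreover have "vec n (x 0) \<in> carrier_vec n" by simp
    ultimately have "det Hm = 0" using det_0_iff_vec_prod_zero[OF Hm] by blast
    with dt show False by simp
  qed
  define r where "r = Re (h 0)"
  have h0r: "h 0 = of_real r" using hreal[of 0] unfolding r_def by (simp add: complex_eq_iff)
  have r0: "r \<noteq> 0" using h00 h0r by auto
  define W where "W v i = (\<Sum>b<n. y i b * v b)" for v i
  define S where "S v = (\<Sum>i<n. (cmod (cc i))^2 * (cmod (W v i))^2)" for v
  have key: "Re (\<Sum>a<n. \<Sum>b<n. cnj (v a) * Hm $$ (a,b) * v b) = r * S v \<and> 0 < S v"
    if v: "\<exists>i<n. v i \<noteq> 0" for v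
  proof
    have "(\<Sum>a<n. \<Sum>b<n. cnj (v a) * Hm $$ (a,b) * v b)
        = (\<Sum>a<n. \<Sum>b<n. \<Sum>i<n. h i * (cnj (v a) * cnj (y i a)) * (y i b * v b))"
    proof (intro sum.cong refl)
      fix a b assume ab: "a \<in> {..<n}" "b \<in> {..<n}"
      have "cnj (v a) * Hm $$ (a,b) * v b = cnj (v a) * (\<Sum>i<n. h i * cnj (y i a) * y i b) * v b"
        using Hdec ab by simp
      also have "\<dots> = (\<Sum>i<n. cnj (v a) * (h i * cnj (y i a) * y i b) * v b)"
        by (simp add: sum_distrib_left sum_distrib_right)
      also have "\<dots> = (\<Sum>i<n. h i * (cnj (v a) * cnj (y i a)) * (y i b * v b))"
        by (intro sum.cong refl) (simp add: mult_ac)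
      finally show "cnj (v a) * Hm $$ (a,b) * v b = (\<Sum>i<n. h i * (cnj (v a) * cnj (y i a)) * (y i b * v b))" .
    qed
    also have "\<dots> = (\<Sum>a<n. \<Sum>i<n. \<Sum>b<n. h i * (cnj (v a) * cnj (y i a)) * (y i b * v b))"
      by (rule sum.cong[OF refl]) (rule sum.swap)
    also have "\<dots> = (\<Sum>i<n. \<Sum>a<n. \<Sum>b<n. h i * (cnj (v a) * cnj (y i a)) * (y i b * v b))"
      by (rule sum.swap)
    also have "\<dots> = (\<Sum>i<n. h i * (cnj (W v i) * W v i))"
    proof (rule sum.cong[OF refl])
      fix i assume "i \<in> {..<n}"
      have "h i * (cnj (W v i) * W v i) = h i * ((\<Sum>a<n. cnj (v a) * cnj (y i a)) * (\<Sum>b<n. y i b * v b))"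
        unfolding W_def by (simp add: mult.commute)
      also have "\<dots> = h i * (\<Sum>a<n. \<Sum>b<n. (cnj (v a) * cnj (y i a)) * (y i b * v b))"
        by (simp only: sum_product)
      also have "\<dots> = (\<Sum>a<n. \<Sum>b<n. h i * (cnj (v a) * cnj (y i a)) * (y i b * v b))"
        by (simp add: sum_distrib_left mult.assoc)
      finally show "(\<Sum>a<n. \<Sum>b<n. h i * (cnj (v a) * cnj (y i a)) * (y i b * v b)) = h i * (cnj (W v i) * W v i)" by simp
    qed
    also have "\<dots> = (\<Sum>i<n. of_real (r * ((cmod (cc i))^2 * (cmod (W v i))^2)))"
    proof (intro sum.cong refl)
      fix i assume "i \<in> {..<n}"
      hence hi: "h i = cnj (cc i) * cc i * h 0" using cc by blast
      show "h i * (cnj (W v i) * W v i) = of_real (r * ((cmod (cc i))^2 * (cmod (W v i))^2))"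
      proof -
        have e1: "cnj (cc i) * cc i = of_real ((cmod (cc i))^2)"
          using complex_norm_square[of "cc i"] by (simp only: mult.commute)
        have e2: "cnj (W v i) * W v i = of_real ((cmod (W v i))^2)"
          using complex_norm_square[of "W v i"] by (simp only: mult.commute)
        have hi': "h i = of_real ((cmod (cc i))^2) * of_real r" unfolding hi h0r e1 ..
        show ?thesis unfolding hi' e2 by (simp only: of_real_mult mult_ac)
      qed
    qed
    also have "\<dots> = of_real (r * S v)" unfolding S_def of_real_sum[symmetric] sum_distrib_left ..
    finally show "Re (\<Sum>a<n. \<Sum>b<n. cnj (v a) * Hm $$ (a,b) * v b) = r * S v" by simp
    obtain a where a: "a < n" "v a \<noteq> 0" using v by blast
    have "v a = (\<Sum>b<n. (if a = b then 1 else 0) * v b)" using sum_delta_l[OF a(1)] by simp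
    also have "\<dots> = (\<Sum>b<n. (\<Sum>i<n. x i a * y i b) * v b)" using XY a by (intro sum.cong) auto
    also have "\<dots> = (\<Sum>b<n. \<Sum>i<n. x i a * (y i b * v b))"
      by (simp add: sum_distrib_right mult.assoc)
    also have "\<dots> = (\<Sum>i<n. \<Sum>b<n. x i a * (y i b * v b))" by (rule sum.swap)
    also have "\<dots> = (\<Sum>i<n. x i a * W v i)"
      unfolding W_def by (simp add: sum_distrib_left)
    finally have va: "v a = (\<Sum>i<n. x i a * W v i)" .
    have "\<exists>i<n. W v i \<noteq> 0"
    proof (rule ccontr)
      assume "\<not> (\<exists>i<n. W v i \<noteq> 0)"
      hence "(\<Sum>i<n. x i a * W v i) = 0" by (intro sum.neutral) auto
      thus False using va a(2) by simp
    qed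
    then obtain i where i: "i < n" "W v i \<noteq> 0" by blast
    have "cc i \<noteq> 0" using cc i by blast
    hence ti: "0 < (cmod (cc i))^2 * (cmod (W v i))^2" using i by simp
    have "(cmod (cc i))^2 * (cmod (W v i))^2 \<le> S v" unfolding S_def
      by (rule member_le_sum) (use i in auto)
    thus "0 < S v" using ti by linarith
  qed
  show ?thesis
  proof (cases "r > 0")
    case True
    thus ?thesis unfolding definite_obj_def using key by (intro disjI1) (simp add: mult_pos_pos)
  next
    case False
    hence "r < 0" using r0 by simp
    thus ?thesis unfolding definite_obj_def using key by (intro disjI2) (simp add: mult_neg_pos)
  qed
qed


theorem lemma7p1:
  fixes ro :: "nat \<Rightarrow> nat \<times> complex mat"
    and rm :: "nat \<Rightarrow> complex mat \<Rightarrow> complex mat"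
  assumes "herm_functor ro rm"
    and "homotopic_to_id ro rm"
    and "\<forall>n. homotopy_equivalence_map (subtopology (mat_top n) (GLm n))
               (subtopology (mat_top (fst (ro n))) (Isom (ro n))) (rm n)"
  shows "\<forall>n. definite_obj (ro n)"
proof
  fix n
  have hf: "herm_obj (ro n)" "\<forall>A\<in>GLm n. rm n A \<in> Isom (ro n)"
    "\<forall>A\<in>GLm n. \<forall>B\<in>GLm n. rm n (A * B) = rm n A * rm n B" "rm n (1\<^sub>m n) = 1\<^sub>m (fst (ro n))"
    using assms(1) unfolding herm_functor_def by blast+
  have fn: "fst (ro n) = n" using assms(2) unfolding homotopic_to_id_def by blast
  define Hm where "Hm = snd (ro n)"
  have ro: "ro n = (n, Hm)" unfolding Hm_def using fn by (metis prod.collapse)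
  show "definite_obj (ro n)"
  proof (cases "n = 0")
    case True thus ?thesis unfolding ro definite_obj_def by simp
  next
    case False
    have Hmc: "Hm \<in> carrier_mat n n" "mat_adjoint Hm = Hm" "det Hm \<noteq> 0"
      using hf(1) unfolding herm_obj_def ro by simp_all
    have Is: "rm n A \<in> carrier_mat n n \<and> mat_adjoint (rm n A) * Hm * rm n A = Hm" if "A \<in> GLm n" for A
      using hf(2) that unfolding Isom_def ro by auto
    show ?thesis unfolding ro
    proof (rule main_alg[OF Hmc, where R="rm n"])
      show "0 < n" using False by simp
      show "\<And>A. A \<in> GLm n \<Longrightarrow> rm n A \<in> carrier_mat n n" using Is by blast
      show "\<And>A. A \<in> GLm n \<Longrightarrow> mat_adjoint (rm n A) * Hm * rm n A = Hm" using Is by blast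
      show "\<And>A B. A \<in> GLm n \<Longrightarrow> B \<in> GLm n \<Longrightarrow> rm n (A * B) = rm n A * rm n B" using hf(3) by blast
      show "rm n (1\<^sub>m n) = 1\<^sub>m n" using hf(4) fn by simp
      show "\<And>g. g \<in> GLm n \<Longrightarrow> g * g = 1\<^sub>m n \<Longrightarrow> tr (rm n g) = tr g"
        by (rule trace_rigid[OF assms(2)])
    qed
  qed
qed


end
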